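(* Let $k\le m$ and $l\le n$ be positive integers, and let $e$ denote all-ones vectors (of length $m$ in $ke$ and of length $n$ in $le$). The class $\mathcal{C}_{m,n}(ke,le)$ is nonempty if and only if $m=pl$ and $n=pk$ for some integer $p$.
   Context: $\mathcal{C}_{m,n}(R,S)$ denotes the set of $m\times n$ $(0,1)$-matrices with row sum vector $R$ and column sum vector $S$ that are convex, i.e. in every row and every column the 1's occur in consecutive positions. Thus $\mathcal{C}_{m,n}(ke,le)$ consists of the convex $m\times n$ $(0,1)$-matrices with every row sum equal to $k$ and every column sum equal to $l$. *)

theory Defs
  imports Main
begin

text \<open>An m x n (0,1)-matrix is represented by an entry function A :: nat => nat => nat
  (row index i < m, column index j < n), required to take values in {0,1} on the index
  range and, for uniqueness, value 0 outside it.\<close>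

definition zero_one_matrix :: "nat \<Rightarrow> nat \<Rightarrow> (nat \<Rightarrow> nat \<Rightarrow> nat) \<Rightarrow> bool" where
  "zero_one_matrix m n A \<longleftrightarrow>
     (\<forall>i j. (i < m \<and> j < n \<longrightarrow> A i j \<in> {0, 1}) \<and> (\<not> (i < m \<and> j < n) \<longrightarrow> A i j = 0))"

definition row_sum :: "nat \<Rightarrow> (nat \<Rightarrow> nat \<Rightarrow> nat) \<Rightarrow> nat \<Rightarrow> nat" where
  "row_sum n A i = (\<Sum>j<n. A i j)"

definition col_sum :: "nat \<Rightarrow> (nat \<Rightarrow> nat \<Rightarrow> nat) \<Rightarrow> nat \<Rightarrow> nat" where
  "col_sum m A j = (\<Sum>i<m. A i j)"

definition convex_matrix :: "nat \<Rightarrow> nat \<Rightarrow> (nat \<Rightarrow> nat \<Rightarrow> nat) \<Rightarrow> bool" where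
  "convex_matrix m n A \<longleftrightarrow>
     (\<forall>i<m. \<forall>j1 j2 j3. j1 \<le> j2 \<and> j2 \<le> j3 \<and> j3 < n \<and> A i j1 = 1 \<and> A i j3 = 1 \<longrightarrow> A i j2 = 1) \<and>
     (\<forall>j<n. \<forall>i1 i2 i3. i1 \<le> i2 \<and> i2 \<le> i3 \<and> i3 < m \<and> A i1 j = 1 \<and> A i3 j = 1 \<longrightarrow> A i2 j = 1)"

definition convex_class :: "nat \<Rightarrow> nat \<Rightarrow> (nat \<Rightarrow> nat) \<Rightarrow> (nat \<Rightarrow> nat) \<Rightarrow> (nat \<Rightarrow> nat \<Rightarrow> nat) set" where
  "convex_class m n R S = {A. zero_one_matrix m n A \<and> convex_matrix m n A \<and>
     (\<forall>i<m. row_sum n A i = R i) \<and> (\<forall>j<n. col_sum m A j = S j)}"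

end

theory Submission
  imports Defs
begin

lemma sum01_card:
  fixes f :: "nat \<Rightarrow> nat"
  assumes "\<forall>j<n. f j \<in> {0,1}"
  shows "(\<Sum>j<n. f j) = card {j. j < n \<and> f j = 1}"
proof -
  have "(\<Sum>j<n. f j) = (\<Sum>j<n. if f j = 1 then 1 else 0)"
    using assms by (intro sum.cong) auto
  also have "\<dots> = card ({..<n} \<inter> {j. f j = 1})"
    by (simp add: sum.If_cases)
  also have "{..<n} \<inter> {j. f j = 1} = {j. j < n \<and> f j = 1}" by auto
  finally show ?thesis .
qed

lemma interval1:
  fixes f :: "nat \<Rightarrow> nat"
  assumes z: "\<forall>j<n. f j \<in> {0,1}" and o: "\<forall>j. \<not> j < n \<longrightarrow> f j = 0"
    and cv: "\<forall>j1 j2 j3. j1 \<le> j2 \<and> j2 \<le> j3 \<and> j3 < n \<and> f j1 = 1 \<and> f j3 = 1 \<longrightarrow> f j2 = 1"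
    and s: "(\<Sum>j<n. f j) = k" and k: "0 < k"
  shows "{j. f j = 1} = {(LEAST j. f j = 1)..<(LEAST j. f j = 1)+k} \<and> (LEAST j. f j = 1) + k \<le> n"
proof -
  define S where "S = {j. f j = 1}"
  have Sn: "S = {j. j < n \<and> f j = 1}" using o unfolding S_def by force
  have cS: "card S = k" using sum01_card[OF z] s Sn by simp
  have fin: "finite S" using Sn by simp
  have ne: "S \<noteq> {}" using cS k by auto
  define a where "a = Min S"
  define b where "b = Max S"
  have aL: "a = (LEAST j. f j = 1)"
  proof -
    have "(LEAST j. f j = 1) = a"
    proof (rule Least_equality)
      show "f a = 1" using Min_in[OF fin ne] unfolding a_def S_def by simp
      show "\<And>y. f y = 1 \<Longrightarrow> a \<le> y" using fin unfolding a_def S_def by simp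
    qed
    then show ?thesis by simp
  qed
  have aS: "a \<in> S" using fin ne a_def by simp
  have bS: "b \<in> S" using fin ne b_def by simp
  have bn: "b < n" using bS Sn by simp
  have "S = {a..b}"
  proof
    show "S \<subseteq> {a..b}" using fin a_def b_def by auto
    show "{a..b} \<subseteq> S"
    proof
      fix x assume "x \<in> {a..b}"
      then have "a \<le> x" "x \<le> b" by auto
      moreover have "f a = 1" "f b = 1" using aS bS unfolding S_def by auto
      ultimately have "f x = 1" using cv bn by blast
      then show "x \<in> S" unfolding S_def by simp
    qed
  qed
  then have "card S = Suc b - a" by simp
  have ab: "a \<le> b" using fin bS a_def by simp
  have "Suc b = a + k" using \<open>card S = Suc b - a\<close> cS ab by linarith
  then have "S = {a..<a+k}" using \<open>S = {a..b}\<close> atLeastLessThanSuc_atLeastAtMost[of a b] by simp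
  moreover have "a + k \<le> n" using bn \<open>card S = Suc b - a\<close> cS k by linarith
  ultimately show ?thesis using aL S_def by simp
qed

lemma fwd:
  assumes A: "A \<in> convex_class m n (\<lambda>_. k) (\<lambda>_. l)" and k: "0 < k" and l: "0 < l"
  shows "k dvd n"
proof -
  have zo: "zero_one_matrix m n A" and cv: "convex_matrix m n A"
    and rs: "\<forall>i<m. row_sum n A i = k" and cs: "\<forall>j<n. col_sum m A j = l"
    using A unfolding convex_class_def by auto
  define a where "a i = (LEAST j. A i j = 1)" for i
  have row: "{j. A i j = 1} = {a i..<a i + k} \<and> a i + k \<le> n" if "i < m" for i
    unfolding a_def
  proof (rule interval1)
    show "\<forall>j<n. A i j \<in> {0, 1}" using zo that unfolding zero_one_matrix_def by auto
    show "\<forall>j. \<not> j < n \<longrightarrow> A i j = 0" using zo that unfolding zero_one_matrix_def by auto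
    show "\<forall>j1 j2 j3. j1 \<le> j2 \<and> j2 \<le> j3 \<and> j3 < n \<and> A i j1 = 1 \<and> A i j3 = 1 \<longrightarrow> A i j2 = 1"
      using cv that unfolding convex_matrix_def by blast
    show "(\<Sum>j<n. A i j) = k" using rs that unfolding row_sum_def by auto
    show "0 < k" by fact
  qed
  have col: "card {i. i < m \<and> A i j = 1} = l" if "j < n" for j
  proof -
    have "\<forall>i<m. A i j \<in> {0,1}" using zo that unfolding zero_one_matrix_def by auto
    from sum01_card[OF this] cs that show ?thesis unfolding col_sum_def by auto
  qed
  define Q where "Q t = (\<forall>i<m. a i < t*k \<longrightarrow> k dvd a i)" for t
  have step: "Suc t * k \<le> n \<and> Q (Suc t)" if tn: "t*k < n" and Qt: "Q t" for t
  proof -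
    define c where "c = t*k"
    define Sc where "Sc = {i. i < m \<and> A i c = 1}"
    have cSc: "card Sc = l" using col tn unfolding Sc_def c_def by simp
    have aSc: "a i = c" if "i \<in> Sc" for i
    proof -
      have im: "i < m" and Aic: "A i c = 1" using that unfolding Sc_def by auto
      have iv: "a i \<le> c \<and> c < a i + k" using row[OF im] Aic by auto
      show ?thesis
      proof (rule ccontr)
        assume "a i \<noteq> c"
        then have "a i < t*k" using iv c_def by simp
        then have "k dvd a i" using Qt im Q_def by blast
        then obtain s where s: "a i = k*s" by auto
        with \<open>a i < t*k\<close> k have "s < t" by (simp add: mult.commute)
        then have "s*k + k \<le> t*k"
          using mult_le_mono1[of "Suc s" t k] by simp
        then show False using iv s c_def by (simp add: mult.commute)
      qed
    qed
    have "Sc \<noteq> {}" using cSc l by auto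
    then obtain i0 where i0: "i0 \<in> Sc" by auto
    have "a i0 + k \<le> n" using row i0 unfolding Sc_def by auto
    then have b1: "Suc t * k \<le> n" using aSc[OF i0] c_def by simp
    have "Q (Suc t)" unfolding Q_def
    proof (intro allI impI)
      fix i' assume im: "i' < m" and lt: "a i' < Suc t * k"
      show "k dvd a i'"
      proof (cases "a i' < c")
        case True then show ?thesis using Qt im Q_def c_def by blast
      next
        case False
        show ?thesis
        proof (cases "a i' = c")
          case True then show ?thesis using c_def by simp
        next
          case False2: False
          define j where "j = a i'"
          have jr: "c < j" "j < c + k" using False False2 lt c_def j_def by auto
          have jn: "j < n" using jr b1 c_def by simp
          have "insert i' Sc \<subseteq> {i. i < m \<and> A i j = 1}"
          proof
            fix x assume "x \<in> insert i' Sc"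
            then show "x \<in> {i. i < m \<and> A i j = 1}"
            proof
              assume "x = i'"
              have "j \<in> {a i'..<a i'+k}" using j_def k by simp
              then have "A i' j = 1" using row[OF im] by blast
              then show ?thesis using \<open>x = i'\<close> im by simp
            next
              assume xs: "x \<in> Sc"
              then have "x < m" unfolding Sc_def by auto
              have "j \<in> {a x..<a x+k}" using aSc[OF xs] jr by simp
              then have "A x j = 1" using row[OF \<open>x < m\<close>] by blast
              then show ?thesis using \<open>x < m\<close> by simp
            qed
          qed
          moreover have "i' \<notin> Sc" using aSc False2 by auto
          ultimately have "card (insert i' Sc) \<le> l"
            using col[OF jn] card_mono[of "{i. i < m \<and> A i j = 1}" "insert i' Sc"] by simp
          moreover have "finite Sc" unfolding Sc_def by simp
          ultimately show ?thesis using cSc \<open>i' \<notin> Sc\<close> by simp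
        qed
      qed
    qed
    then show ?thesis using b1 by simp
  qed
  have all: "t*k \<le> n \<Longrightarrow> Q t" for t
  proof (induction t)
    case 0 then show ?case unfolding Q_def by simp
  next
    case (Suc t)
    then have "t*k < n" using k by simp
    then show ?case using Suc step by simp
  qed
  show ?thesis
  proof (rule ccontr)
    assume nd: "\<not> k dvd n"
    define t where "t = n div k"
    have e: "t*k + n mod k = n" unfolding t_def using div_mult_mod_eq[of n k] by simp
    have "n mod k \<noteq> 0" using nd by (simp add: mod_eq_0_iff_dvd)
    then have "t*k < n" using e by linarith
    then have "Suc t * k \<le> n" using step all by simp
    moreover have "n mod k < k" using k by simp
    ultimately show False using e by simp
  qed
qed

lemma total:
  assumes "zero_one_matrix m n A" "\<forall>i<m. row_sum n A i = k" "\<forall>j<n. col_sum m A j = l"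
  shows "m*k = n*l"
proof -
  have "m*k = (\<Sum>i<m. row_sum n A i)" using assms by simp
  also have "\<dots> = (\<Sum>j<n. col_sum m A j)" unfolding row_sum_def col_sum_def by (rule sum.swap)
  also have "\<dots> = n*l" using assms by simp
  finally show ?thesis .
qed

lemma blockcount:
  fixes k q :: nat
  assumes "0 < k"
  shows "{j. j div k = q} = {q*k..<q*k+k}"
proof -
  have "j div k = q \<longleftrightarrow> q*k \<le> j \<and> j < q*k+k" for j
  proof
    assume h: "j div k = q"
    have 1: "j div k * k \<le> j" by simp
    have "j div k < Suc q" using h by simp
    then have 2: "j < Suc q * k" using div_less_iff_less_mult[OF assms] by blast
    show "q*k \<le> j \<and> j < q*k+k" using 1 2 h by simp
  next
    assume "q*k \<le> j \<and> j < q*k+k"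
    then show "j div k = q" by (intro div_nat_eqI) (auto simp: mult.commute)
  qed
  then show ?thesis by (intro set_eqI) simp
qed

theorem mainTheorem6:
  fixes k l m n :: nat
  assumes "0 < k" "k \<le> m" "0 < l" "l \<le> n"
  shows "convex_class m n (\<lambda>_. k) (\<lambda>_. l) \<noteq> {} \<longleftrightarrow> (\<exists>p::nat. m = p * l \<and> n = p * k)"
proof
  assume "convex_class m n (\<lambda>_. k) (\<lambda>_. l) \<noteq> {}"
  then obtain A where A: "A \<in> convex_class m n (\<lambda>_. k) (\<lambda>_. l)" by auto
  then have "k dvd n" using fwd assms by blast
  then obtain p where p: "n = p*k" by (metis dvd_def mult.commute)
  have "m*k = n*l" using A total unfolding convex_class_def by blast
  then have "m*k = (p*l)*k" using p by (simp add: algebra_simps)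
  then have "m = p*l" using assms(1) by auto
  then show "\<exists>p::nat. m = p * l \<and> n = p * k" using p by blast
next
  assume "\<exists>p::nat. m = p * l \<and> n = p * k"
  then obtain p where p: "m = p*l" "n = p*k" by blast
  define A where "A i j = (if i < m \<and> j < n \<and> i div l = j div k then 1 else 0::nat)" for i j
  have zo: "zero_one_matrix m n A" unfolding zero_one_matrix_def A_def by auto
  have cv: "convex_matrix m n A" unfolding convex_matrix_def
  proof (intro conjI allI impI)
    fix i j1 j2 j3 assume "i < m" and h: "j1 \<le> j2 \<and> j2 \<le> j3 \<and> j3 < n \<and> A i j1 = 1 \<and> A i j3 = 1"
    then have e: "i div l = j1 div k" "i div l = j3 div k" "i < m"
      by (auto simp: A_def split: if_splits)
    have "j1 div k \<le> j2 div k" "j2 div k \<le> j3 div k" using h div_le_mono by auto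
    then show "A i j2 = 1" using e h unfolding A_def by auto
  next
    fix j i1 i2 i3 assume "j < n" and h: "i1 \<le> i2 \<and> i2 \<le> i3 \<and> i3 < m \<and> A i1 j = 1 \<and> A i3 j = 1"
    then have e: "i1 div l = j div k" "i3 div l = j div k" "j < n"
      by (auto simp: A_def split: if_splits)
    have "i1 div l \<le> i2 div l" "i2 div l \<le> i3 div l" using h div_le_mono by auto
    then show "A i2 j = 1" using e h unfolding A_def by auto
  qed
  have rs: "row_sum n A i = k" if "i < m" for i
  proof -
    have "row_sum n A i = card {j. j < n \<and> A i j = 1}"
      unfolding row_sum_def by (rule sum01_card) (auto simp: A_def)
    also have "{j. j < n \<and> A i j = 1} = {j. j div k = i div l}"
    proof -
      have "i div l < p" using that p assms by (simp add: div_less_iff_less_mult)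
      have "j < n" if h: "j div k = i div l" for j
      proof -
        have "j div k < p" using h \<open>i div l < p\<close> by simp
        then show ?thesis using div_less_iff_less_mult[OF assms(1)] p by simp
      qed
      then show ?thesis using that unfolding A_def by auto
    qed
    finally show ?thesis using blockcount[OF assms(1)] by simp
  qed
  have cs: "col_sum m A j = l" if "j < n" for j
  proof -
    have "col_sum m A j = card {i. i < m \<and> A i j = 1}"
      unfolding col_sum_def by (rule sum01_card) (auto simp: A_def)
    also have "{i. i < m \<and> A i j = 1} = {i. i div l = j div k}"
    proof -
      have "j div k < p" using that p assms by (simp add: div_less_iff_less_mult)
      have "i < m" if h: "i div l = j div k" for i
      proof -
        have "i div l < p" using h \<open>j div k < p\<close> by simp
        then show ?thesis using div_less_iff_less_mult[OF assms(3)] p by simp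
      qed
      then show ?thesis using that unfolding A_def by auto
    qed
    finally show ?thesis using blockcount[OF assms(3)] by simp
  qed
  have "A \<in> convex_class m n (\<lambda>_. k) (\<lambda>_. l)"
    unfolding convex_class_def using zo cv rs cs by blast
  then show "convex_class m n (\<lambda>_. k) (\<lambda>_. l) \<noteq> {}" by auto
qed

end
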